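(* Let $b\ge1$ and let $G$ be an extended gadget of type II with vertices $p,q,r$ and directed paths $P_1,P_2$ as in its definition. Then: (1) for every $x\in V(G)\setminus\{p,q\}$ there exist $a\in\{1,2\}$ and an $(a,b)$-alternating-path $R$ contained in $G$ with $t_a(R)=x$, $s_1(R)\in\{p,q\}$ and $|V(R)\cap\{p,q\}|=1$; (2) for every non-empty set $X\subseteq V(P_1)\setminus\{p,r\}$ there exist $a\in\{1,2\}$ and an $(a,b)$-alternating-path $R$ contained in $G$ with $t_a(R)\in X$, $s_1(R)\in\{p,q\}$ and $|V(R)\cap\{p,q\}|=|V(R)\cap X|=1$.
   Context: Fix an integer $b\ge1$. A basic gadget of type II is a digraph consisting of vertices $p,q,r$ and a directed path $P_1$ from $r$ to $p$ of length at least $2b^2+b-2$ with $q\notin V(P_1)$, such that every vertex of $P_1$ has an arc to $q$. An extended gadget of type II consists of such a basic gadget together with a directed path $P_2$ of length at least $b$ whose last vertex is $r$, with $V(P_1)\cap V(P_2)=\{r\}$, $q\notin V(P_2)$, and such that either there is an arc from the first vertex of $P_2$ to the second vertex of $P_1$, or there is an arc from some vertex of $V(P_1)\setminus\{r\}$ to the first vertex of $P_2$. For integers $a,b\ge1$, an $(a,b)$-alternating-path is an oriented path $R$ consisting of vertices $s_1,\dots,s_a,t_1,\dots,t_a$ and pairwise internally vertex-disjoint directed paths $Q_1,\dots,Q_a,Q'_1,\dots,Q'_{a-1}$, where $Q_i$ goes from $s_i$ to $t_i$, $Q'_i$ goes from $s_{i+1}$ to $t_i$, and $Q_2,\dots,Q_{a-1},Q'_1,\dots,Q'_{a-1}$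 each have length at least $b$ ($Q_1$, $Q_a$ may have length zero). We write $s_i(R),t_i(R)$ for its vertices. *)

theory Defs
  imports Main
begin

definition dpath :: "'a set \<Rightarrow> ('a \<times> 'a) set \<Rightarrow> 'a list \<Rightarrow> bool" where
  "dpath V E P \<equiv> P \<noteq> [] \<and> distinct P \<and> set P \<subseteq> V \<and>
     (\<forall>i. Suc i < length P \<longrightarrow> (P ! i, P ! Suc i) \<in> E)"

definition plen :: "'a list \<Rightarrow> nat" where
  "plen P = length P - 1"

text \<open>The vertex sequence of the oriented path
  s1 Q1 t1 (Q'1 reversed) s2 Q2 t2 ... sa Qa ta.\<close>

definition alt_walk :: "nat \<Rightarrow> (nat \<Rightarrow> 'a list) \<Rightarrow> (nat \<Rightarrow> 'a list) \<Rightarrow> 'a list" where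
  "alt_walk a Q Q' = Q 1 @ concat (map (\<lambda>i. tl (rev (Q' i)) @ tl (Q (Suc i))) [1..<a])"

text \<open>(a,b)-alternating path contained in the digraph (V,E), given by the directed paths
  Q 1..Q a and Q' 1..Q' (a-1); s_i = hd (Q i), t_i = last (Q i). Being an oriented path
  (hence the Q's being pairwise internally vertex-disjoint) is expressed by distinctness of
  the whole vertex sequence.\<close>

definition alt_path :: "'a set \<Rightarrow> ('a \<times> 'a) set \<Rightarrow> nat \<Rightarrow> nat \<Rightarrow>
    (nat \<Rightarrow> 'a list) \<Rightarrow> (nat \<Rightarrow> 'a list) \<Rightarrow> bool" where
  "alt_path V E a b Q Q' \<equiv> 1 \<le> a \<and>
     (\<forall>i\<in>{1..a}. dpath V E (Q i)) \<and>
     (\<forall>i\<in>{1..<a}. dpath V E (Q' i) \<and> hd (Q' i) = hd (Q (Suc i)) \<and>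
                    last (Q' i) = last (Q i) \<and> b \<le> plen (Q' i)) \<and>
     (\<forall>i\<in>{2..<a}. b \<le> plen (Q i)) \<and>
     distinct (alt_walk a Q Q')"

definition basic_gadget2 :: "'a set \<Rightarrow> ('a \<times> 'a) set \<Rightarrow> nat \<Rightarrow> 'a \<Rightarrow> 'a \<Rightarrow> 'a \<Rightarrow> 'a list \<Rightarrow> bool" where
  "basic_gadget2 V E b p q r P1 \<equiv>
     E \<subseteq> V \<times> V \<and> V = set P1 \<union> {q} \<and>
     dpath V E P1 \<and> hd P1 = r \<and> last P1 = p \<and> 2 * b^2 + b - 2 \<le> plen P1 \<and>
     q \<notin> set P1 \<and> (\<forall>v\<in>set P1. (v, q) \<in> E)"

definition ext_gadget2 :: "'a set \<Rightarrow> ('a \<times> 'a) set \<Rightarrow> nat \<Rightarrow> 'a \<Rightarrow> 'a \<Rightarrow> 'a \<Rightarrow> 'a list \<Rightarrow> 'a list \<Rightarrow> bool" where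
  "ext_gadget2 V E b p q r P1 P2 \<equiv>
     E \<subseteq> V \<times> V \<and> V = set P1 \<union> set P2 \<union> {q} \<and>
     basic_gadget2 (set P1 \<union> {q}) (E \<inter> ((set P1 \<union> {q}) \<times> (set P1 \<union> {q}))) b p q r P1 \<and>
     dpath V E P2 \<and> b \<le> plen P2 \<and> last P2 = r \<and> set P1 \<inter> set P2 = {r} \<and> q \<notin> set P2 \<and>
     ((hd P2, P1 ! 1) \<in> E \<or> (\<exists>v\<in>set P1 - {r}. (v, hd P2) \<in> E))"

end

theory Submission
  imports Defs
begin

lemma dpath_iff: "dpath V E P \<longleftrightarrow> P \<noteq> [] \<and> distinct P \<and> set P \<subseteq> V \<and> successively (\<lambda>x y. (x,y)\<in>E) P"
  by (simp add: dpath_def successively_conv_nth)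

lemma alt1: "dpath V E Q \<Longrightarrow> alt_path V E 1 b (\<lambda>_. Q) Q' \<and> alt_walk 1 (\<lambda>_. Q) Q' = Q"
  by (auto simp: alt_path_def alt_walk_def dpath_def)

lemma alt2:
  assumes "dpath V E W" "dpath V E Z" "hd W = hd Z" "last W = z" "b \<le> plen W"
    "distinct (rev W @ tl Z)"
  shows "alt_path V E 2 b (\<lambda>i. if i = 1 then [z] else Z) (\<lambda>_. W) \<and>
         alt_walk 2 (\<lambda>i. if i = 1 then [z] else Z) (\<lambda>_. W) = rev W @ tl Z"
proof -
  have W: "W \<noteq> []" "set W \<subseteq> V" using assms(1) by (auto simp: dpath_def)
  then have zV: "z \<in> V" using assms(4) by auto
  have rw: "rev W = z # tl (rev W)" using W assms(4)
    by (metis hd_rev list.collapse rev_is_Nil_conv)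
  have w: "alt_walk 2 (\<lambda>i. if i = 1 then [z] else Z) (\<lambda>_. W) = rev W @ tl Z"
    unfolding alt_walk_def by (simp add: numeral_2_eq_2) (metis append_Cons append_Nil rw)
  have d: "dpath V E [z]" using zV by (simp add: dpath_def)
  have s: "{1..(2::nat)} = {1,2}" "{1..<(2::nat)} = {1}" "{2..<(2::nat)} = {}" by auto
  show ?thesis unfolding alt_path_def w s using assms d W
    by (auto simp: dpath_def)
qed

lemma fin:
  assumes "alt_path V E a b Q Q'" "a \<in> {1,2}" "last (Q a) = x" "x \<in> X" "hd (Q 1) \<in> {p, q}"
    "set (alt_walk a Q Q') \<inter> {p, q} = {y}" "set (alt_walk a Q Q') \<inter> X = {x}"
  shows "\<exists>a\<in>{1, 2}. \<exists>Q Q'. alt_path V E a b Q Q' \<and>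
            last (Q a) \<in> X \<and> hd (Q 1) \<in> {p, q} \<and>
            card (set (alt_walk a Q Q') \<inter> {p, q}) = 1 \<and>
            card (set (alt_walk a Q Q') \<inter> X) = 1"
  using assms by (intro bexI[of _ a] exI[of _ Q] exI[of _ Q']) auto

lemma part2:
  assumes sT: "successively (\<lambda>x y. (x,y)\<in>E) (r # T)"
    and sP: "successively (\<lambda>x y. (x,y)\<in>E) P2"
    and dT: "distinct (r # T)" and dP: "distinct P2"
    and VT: "set (r # T) \<subseteq> V" and VP: "set P2 \<subseteq> V" and qV: "q \<in> V"
    and Tne: "T \<noteq> []" and lT: "last T = p" and Pne: "P2 \<noteq> []" and lP: "last P2 = r"
    and TP: "set T \<inter> set P2 = {}" and qT: "q \<notin> set T" and qr: "q \<noteq> r" and qP: "q \<notin> set P2"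
    and Eq: "\<forall>v\<in>set (r # T). (v, q) \<in> E"
    and bP: "b < length P2"
    and sp: "(hd P2, hd T) \<in> E \<or> (\<exists>v\<in>set T. (v, hd P2) \<in> E)"
    and Xne: "X \<noteq> {}" and XT: "X \<subseteq> set T - {p}"
  shows "\<exists>a\<in>{1, 2}. \<exists>Q Q'. alt_path V E a b Q Q' \<and>
            last (Q a) \<in> X \<and> hd (Q 1) \<in> {p, q} \<and>
            card (set (alt_walk a Q Q') \<inter> {p, q}) = 1 \<and>
            card (set (alt_walk a Q Q') \<inter> X) = 1"
proof -
  have sT': "successively (\<lambda>x y. (x,y)\<in>E) T" using sT by (auto simp: successively_Cons)
  have dT': "distinct T" and rT: "r \<notin> set T" using dT by auto
  have pT: "p \<in> set T" using lT Tne by auto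
  have pP: "p \<notin> set P2" using pT TP by auto
  have rq: "(r, q) \<in> E" using Eq by auto
  have hP: "hd P2 \<in> set P2" using Pne by simp
  have XP: "X \<inter> set P2 = {}" using XT TP by blast
  have qX: "q \<notin> X" using XT qT by blast
  have pX: "p \<notin> X" using XT by blast
  have VT': "set T \<subseteq> V" using VT by simp
  have dW: "dpath V E (P2 @ [q])"
    using sP dP VP qV qP lP rq Pne by (auto simp: dpath_iff successively_append_iff)
  have plW: "b \<le> plen (P2 @ [q])" using bP by (simp add: plen_def)
  show ?thesis
  proof (cases "(hd P2, hd T) \<in> E")
    case True
    obtain A x B where T: "T = A @ x # B" and xX: "x \<in> X" and AX: "\<forall>y\<in>set A. y \<notin> X"
      using split_list_first_propE[of T "\<lambda>y. y \<in> X"] Xne XT by blast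
    have "B \<noteq> []" using T lT xX pX by auto
    then have pB: "p \<in> set B" using T lT by auto
    have AxT: "set (A @ [x]) \<subseteq> set T" using T by auto
    have dAx: "distinct (A @ [x])" using dT' unfolding T by auto
    have pAx: "p \<notin> set (A @ [x])" using dT' pB unfolding T by auto
    have hnin: "hd P2 \<notin> set (A @ [x])" using AxT hP TP by blast
    have qAx: "q \<notin> set (A @ [x])" using AxT qT by blast
    have PAx: "set P2 \<inter> set (A @ [x]) = {}" using AxT TP by blast
    define Z where "Z = hd P2 # A @ [x]"
    have sAx: "successively (\<lambda>x y. (x,y)\<in>E) (A @ [x])" using sT' unfolding T
      by (simp add: successively_append_iff)
    have hAx: "hd (A @ [x]) = hd T" using T by (cases A) auto
    have dZ: "dpath V E Z" unfolding Z_def dpath_iff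
    proof (intro conjI)
      show "distinct (hd P2 # A @ [x])" using dAx hnin by simp
      show "set (hd P2 # A @ [x]) \<subseteq> V" using AxT VT' hP VP by auto
      show "successively (\<lambda>x y. (x, y) \<in> E) (hd P2 # A @ [x])"
        using sAx hAx True by (simp add: successively_Cons)
    qed simp
    have w: "rev (P2 @ [q]) @ tl Z = q # rev P2 @ (A @ [x])" by (simp add: Z_def)
    have "alt_path V E 2 b (\<lambda>i. if i = 1 then [q] else Z) (\<lambda>_. P2 @ [q]) \<and>
         alt_walk 2 (\<lambda>i. if i = 1 then [q] else Z) (\<lambda>_. P2 @ [q]) = rev (P2 @ [q]) @ tl Z"
    proof (rule alt2[OF dW dZ])
      show "hd (P2 @ [q]) = hd Z" using Pne by (simp add: Z_def)
      show "distinct (rev (P2 @ [q]) @ tl Z)" unfolding w using qP qAx dP dAx PAx by simp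
    qed (use plW in auto)
    moreover have "set (rev (P2 @ [q]) @ tl Z) \<inter> {p, q} = {q}" unfolding w using pP pAx by auto
    moreover have "set (rev (P2 @ [q]) @ tl Z) \<inter> X = {x}" unfolding w using XP AX xX qX by auto
    moreover have "last ((\<lambda>i::nat. if i = 1 then [q] else Z) 2) = x" by (simp add: Z_def)
    ultimately show ?thesis using xX
      by (intro fin[where x=x and y=q and a=2 and Q="\<lambda>i::nat. if i = 1 then [q] else Z" and Q'="\<lambda>_. P2 @ [q]"]) auto
  next
    case False
    then obtain v where vT: "v \<in> set T" and vE: "(v, hd P2) \<in> E" using sp by auto
    show ?thesis
    proof (cases "v = p")
      case True
      obtain A x B where T: "T = A @ x # B" and xX: "x \<in> X" and AX: "\<forall>y\<in>set A. y \<notin> X"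
        using split_list_first_propE[of T "\<lambda>y. y \<in> X"] Xne XT by blast
      have "B \<noteq> []" using T lT xX pX by auto
      then have pB: "p \<in> set B" using T lT by auto
      have AxT: "set (A @ [x]) \<subseteq> set T" using T by auto
      have dAx: "distinct (A @ [x])" using dT' unfolding T by auto
      have pAx: "p \<notin> set (A @ [x])" using dT' pB unfolding T by auto
      have qAx: "q \<notin> set (A @ [x])" using AxT qT by blast
      have PAx: "set P2 \<inter> set (A @ [x]) = {}" using AxT TP by blast
      have sAx: "successively (\<lambda>x y. (x,y)\<in>E) (A @ [x])" using sT' unfolding T
        by (simp add: successively_append_iff)
      have hAx: "hd (A @ [x]) = hd T" using T by (cases A) auto
      have rhd: "(r, hd T) \<in> E" using sT Tne by (simp add: successively_Cons)
      define Q where "Q = p # P2 @ A @ [x]"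
      have dQ: "dpath V E Q" unfolding Q_def dpath_iff
      proof (intro conjI)
        show "distinct (p # P2 @ A @ [x])" using dAx pAx pP dP PAx by auto
        show "set (p # P2 @ A @ [x]) \<subseteq> V" using AxT VT' pT VP by auto
        have "successively (\<lambda>x y. (x, y) \<in> E) (P2 @ (A @ [x]))"
          using sAx hAx sP lP rhd Pne by (simp add: successively_append_iff)
        then show "successively (\<lambda>x y. (x, y) \<in> E) (p # P2 @ A @ [x])"
          using vE True Pne by (simp add: successively_Cons)
      qed simp
      have a1: "alt_path V E 1 b (\<lambda>_. Q) (\<lambda>_. []) \<and> alt_walk 1 (\<lambda>_. Q) (\<lambda>_. []) = Q"
        by (rule alt1[OF dQ])
      moreover have "set Q \<inter> {p, q} = {p}" unfolding Q_def using qP qAx by auto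
      moreover have "set Q \<inter> X = {x}" unfolding Q_def using XP AX xX pX by auto
      moreover have "last ((\<lambda>_. Q) 1) = x" by (simp add: Q_def)
      moreover have "hd ((\<lambda>_. Q) 1) = p" by (simp add: Q_def)
      ultimately show ?thesis
        using xX by (intro fin[where x=x and y=p and a=1 and Q="\<lambda>_. Q" and Q'="\<lambda>_. []"]) auto
    next
      case False
      obtain C D where T: "T = C @ v # D" using vT by (meson split_list)
      have "D \<noteq> []" using T lT False by auto
      then have pD: "p \<in> set D" using T lT by auto
      show ?thesis
      proof (cases "\<exists>y\<in>set (C @ [v]). y \<in> X")
        case True
        then obtain A x B where Cv: "C @ [v] = A @ x # B" and xX: "x \<in> X"
          and BX: "\<forall>y\<in>set B. y \<notin> X"
          using split_list_last_propE[of "C @ [v]" "\<lambda>y. y \<in> X"] by blast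
        have T2: "T = A @ (x # B) @ D" using T Cv by simp
        have lxB: "last (x # B) = v" using Cv by (metis last_appendR last_snoc list.distinct(1))
        have xBT: "set (x # B) \<subseteq> set T" using T2 by auto
        have dxB: "distinct (x # B)" using dT' unfolding T2 by simp
        have pxB: "p \<notin> set (x # B)" using dT' pD unfolding T2 by auto
        have qxB: "q \<notin> set (x # B)" using xBT qT by blast
        have PxB: "set (x # B) \<inter> set P2 = {}" using xBT TP by blast
        have sxB: "successively (\<lambda>x y. (x,y)\<in>E) (x # B)" using sT' unfolding T2 successively_append_iff
          by blast
        define W where "W = (x # B) @ (P2 @ [q])"
        have dW2: "dpath V E W" unfolding W_def dpath_iff
        proof (intro conjI)
          show "distinct ((x # B) @ P2 @ [q])" using dxB dP qP qxB PxB by auto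
          show "set ((x # B) @ P2 @ [q]) \<subseteq> V" using xBT VT' qV VP by auto
          have "successively (\<lambda>x y. (x, y) \<in> E) (P2 @ [q])" using dW by (simp add: dpath_iff)
          then show "successively (\<lambda>x y. (x, y) \<in> E) ((x # B) @ P2 @ [q])"
            using sxB lxB vE Pne by (subst successively_append_iff) auto
        qed simp
        have dZ: "dpath V E [x]" using xBT VT' by (auto simp: dpath_iff)
        have w: "rev W @ tl [x] = q # rev P2 @ rev B @ [x]" by (simp add: W_def)
        have "alt_path V E 2 b (\<lambda>i. if i = 1 then [q] else [x]) (\<lambda>_. W) \<and>
           alt_walk 2 (\<lambda>i. if i = 1 then [q] else [x]) (\<lambda>_. W) = rev W @ tl [x]"
        proof (rule alt2[OF dW2 dZ])
          show "b \<le> plen W" using bP by (simp add: W_def plen_def)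
          show "distinct (rev W @ tl [x])" using dW2 by (simp add: dpath_iff)
        qed (auto simp: W_def)
        moreover have "set (rev W @ tl [x]) \<inter> {p, q} = {q}" unfolding w using pP pxB by auto
        moreover have "set (rev W @ tl [x]) \<inter> X = {x}" unfolding w using XP BX xX qX by auto
        moreover have "last ((\<lambda>i::nat. if i = 1 then [q] else [x]) 2) = x" by simp
        ultimately show ?thesis using xX
          by (intro fin[where x=x and y=q and a=2 and Q="\<lambda>i::nat. if i = 1 then [q] else [x]" and Q'="\<lambda>_. W"]) auto
      next
        case False
        then have vX: "v \<notin> X" and CX: "\<forall>y\<in>set C. y \<notin> X" by auto
        have "\<exists>y\<in>set D. y \<in> X" using False Xne XT T by auto
        then obtain A x B where D: "D = A @ x # B" and xX: "x \<in> X" and AX: "\<forall>y\<in>set A. y \<notin> X"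
          using split_list_first_propE[of D "\<lambda>y. y \<in> X"] by blast
        have "B \<noteq> []" using T D lT xX pX by auto
        then have pB: "p \<in> set B" using T D lT by auto
        have T2: "T = C @ (v # A @ [x]) @ B" using T D by simp
        define Z where "Z = v # A @ [x]"
        have ZT: "set Z \<subseteq> set T" using T2 by (auto simp: Z_def)
        have dZ0: "distinct Z" using dT' unfolding T2 Z_def by simp
        have pZ: "p \<notin> set Z" using dT' pB unfolding T2 Z_def by auto
        have qZ: "q \<notin> set Z" using ZT qT by blast
        have PZ: "set Z \<inter> set P2 = {}" using ZT TP by blast
        define W where "W = [v] @ (P2 @ [q])"
        have dW2: "dpath V E W" unfolding W_def dpath_iff
        proof (intro conjI)
          show "distinct ([v] @ P2 @ [q])" using PZ dP qP qT vT by (auto simp: Z_def)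
          show "set ([v] @ P2 @ [q]) \<subseteq> V" using vT VT' qV VP by auto
          have "successively (\<lambda>x y. (x, y) \<in> E) (P2 @ [q])" using dW by (simp add: dpath_iff)
          then show "successively (\<lambda>x y. (x, y) \<in> E) ([v] @ P2 @ [q])"
            using vE Pne by (auto simp: successively_Cons)
        qed simp
        have dZ: "dpath V E Z" unfolding dpath_iff
        proof (intro conjI)
          show "successively (\<lambda>x y. (x, y) \<in> E) Z" using sT' unfolding T2 Z_def[symmetric] successively_append_iff
            by blast
        qed (use dZ0 ZT VT' in \<open>auto simp: Z_def\<close>)
        have w: "rev W @ tl Z = q # rev P2 @ Z" by (simp add: W_def Z_def)
        have "alt_path V E 2 b (\<lambda>i. if i = 1 then [q] else Z) (\<lambda>_. W) \<and>
           alt_walk 2 (\<lambda>i. if i = 1 then [q] else Z) (\<lambda>_. W) = rev W @ tl Z"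
        proof (rule alt2[OF dW2 dZ])
          show "b \<le> plen W" using bP by (simp add: W_def plen_def)
          show "distinct (rev W @ tl Z)" unfolding w using qP qZ dP dZ0 PZ by auto
        qed (auto simp: W_def Z_def)
        moreover have "set (rev W @ tl Z) \<inter> {p, q} = {q}" unfolding w using pP pZ by auto
        moreover have "set (rev W @ tl Z) \<inter> X = {x}" unfolding w unfolding Z_def using XP AX xX qX vX by auto
        moreover have "last ((\<lambda>i::nat. if i = 1 then [q] else Z) 2) = x" by (simp add: Z_def)
        ultimately show ?thesis using xX
          by (intro fin[where x=x and y=q and a=2 and Q="\<lambda>i::nat. if i = 1 then [q] else Z" and Q'="\<lambda>_. W"]) auto
      qed
    qed
  qed
qed

lemma bnd: "(1::nat) \<le> b \<Longrightarrow> b \<le> 2 * b^2 + b - 2"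
proof -
  assume "1 \<le> b"
  then have "1 \<le> b^2" by simp
  then show ?thesis by linarith
qed

theorem lemma2p5:
  fixes V :: "'a set" and E :: "('a \<times> 'a) set" and b :: nat and p q r :: 'a
    and P1 P2 :: "'a list"
  assumes "1 \<le> b"
    and "ext_gadget2 V E b p q r P1 P2"
  shows "(\<forall>x\<in>V - {p, q}. \<exists>a\<in>{1, 2}. \<exists>Q Q'. alt_path V E a b Q Q' \<and>
            last (Q a) = x \<and> hd (Q 1) \<in> {p, q} \<and>
            card (set (alt_walk a Q Q') \<inter> {p, q}) = 1)
       \<and> (\<forall>X. X \<noteq> {} \<and> X \<subseteq> set P1 - {p, r} \<longrightarrow>
            (\<exists>a\<in>{1, 2}. \<exists>Q Q'. alt_path V E a b Q Q' \<and>
            last (Q a) \<in> X \<and> hd (Q 1) \<in> {p, q} \<and>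
            card (set (alt_walk a Q Q') \<inter> {p, q}) = 1 \<and>
            card (set (alt_walk a Q Q') \<inter> X) = 1))"
proof -
  define V1 where "V1 = set P1 \<union> {q}"
  define E1 where "E1 = E \<inter> (V1 \<times> V1)"
  have VV: "V = set P1 \<union> set P2 \<union> {q}"
    and bg: "basic_gadget2 V1 E1 b p q r P1"
    and dP2: "dpath V E P2" and bP2: "b \<le> plen P2" and lP: "last P2 = r"
    and PP: "set P1 \<inter> set P2 = {r}" and qP: "q \<notin> set P2"
    and sp0: "(hd P2, P1 ! 1) \<in> E \<or> (\<exists>v\<in>set P1 - {r}. (v, hd P2) \<in> E)"
    using assms(2) unfolding ext_gadget2_def V1_def E1_def by auto
  have dP1: "dpath V1 E1 P1" and hP1: "hd P1 = r" and lP1: "last P1 = p"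
    and len: "2 * b^2 + b - 2 \<le> plen P1" and qP1: "q \<notin> set P1"
    and Eq1: "\<forall>v\<in>set P1. (v, q) \<in> E1"
    using bg unfolding basic_gadget2_def by auto
  define T where "T = tl P1"
  have P1ne: "P1 \<noteq> []" using dP1 by (simp add: dpath_def)
  have P1T: "P1 = r # T" using P1ne hP1 unfolding T_def by (metis list.collapse)
  have lenT: "b \<le> length T" using len bnd[OF assms(1)] P1T by (simp add: plen_def)
  then have Tne: "T \<noteq> []" using assms(1) by auto
  have lT: "last T = p" using lP1 P1T Tne by simp
  have E1E: "E1 \<subseteq> E" unfolding E1_def by auto
  have sT: "successively (\<lambda>x y. (x,y)\<in>E) (r # T)"
    using dP1 E1E unfolding P1T dpath_iff by (auto intro: successively_mono)
  have dT: "distinct (r # T)" using dP1 P1T by (simp add: dpath_iff)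
  have VT: "set (r # T) \<subseteq> V" using VV P1T by auto
  have sP: "successively (\<lambda>x y. (x,y)\<in>E) P2" and dP: "distinct P2" and VP: "set P2 \<subseteq> V"
    and Pne: "P2 \<noteq> []"
    using dP2 by (auto simp: dpath_iff)
  have qV: "q \<in> V" using VV by auto
  have TP: "set T \<inter> set P2 = {}" using PP dT P1T by auto
  have qT: "q \<notin> set T" and qr: "q \<noteq> r" using qP1 P1T by auto
  have Eq: "\<forall>v\<in>set (r # T). (v, q) \<in> E" using Eq1 E1E P1T by auto
  have bP: "b < length P2" using bP2 Pne assms(1) by (simp add: plen_def)
  have sp: "(hd P2, hd T) \<in> E \<or> (\<exists>v\<in>set T. (v, hd P2) \<in> E)"
    using sp0 P1T Tne dT by (auto simp: hd_conv_nth)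
  note P2 = part2[OF sT sP dT dP VT VP qV Tne lT Pne lP TP qT qr qP Eq bP sp]
  have part2': "\<forall>X. X \<noteq> {} \<and> X \<subseteq> set P1 - {p, r} \<longrightarrow>
            (\<exists>a\<in>{1, 2}. \<exists>Q Q'. alt_path V E a b Q Q' \<and>
            last (Q a) \<in> X \<and> hd (Q 1) \<in> {p, q} \<and>
            card (set (alt_walk a Q Q') \<inter> {p, q}) = 1 \<and>
            card (set (alt_walk a Q Q') \<inter> X) = 1)"
  proof (intro allI impI)
    fix X assume "X \<noteq> {} \<and> X \<subseteq> set P1 - {p, r}"
    then show "\<exists>a\<in>{1, 2}. \<exists>Q Q'. alt_path V E a b Q Q' \<and>
            last (Q a) \<in> X \<and> hd (Q 1) \<in> {p, q} \<and>
            card (set (alt_walk a Q Q') \<inter> {p, q}) = 1 \<and>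
            card (set (alt_walk a Q Q') \<inter> X) = 1"
      using P2[of X] P1T by auto
  qed
  have part1: "\<forall>x\<in>V - {p, q}. \<exists>a\<in>{1, 2}. \<exists>Q Q'. alt_path V E a b Q Q' \<and>
            last (Q a) = x \<and> hd (Q 1) \<in> {p, q} \<and>
            card (set (alt_walk a Q Q') \<inter> {p, q}) = 1"
  proof
    fix x assume x: "x \<in> V - {p, q}"
    show "\<exists>a\<in>{1, 2}. \<exists>Q Q'. alt_path V E a b Q Q' \<and>
            last (Q a) = x \<and> hd (Q 1) \<in> {p, q} \<and>
            card (set (alt_walk a Q Q') \<inter> {p, q}) = 1"
    proof (cases "x \<in> set T")
      case True
      then have "{x} \<noteq> {} \<and> {x} \<subseteq> set T - {p}" using x by auto
      from P2[OF conjunct1[OF this] conjunct2[OF this]] show ?thesis by auto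
    next
      case False
      then have xP: "x \<in> set P2" using x VV P1T lP Pne by auto
      then obtain A B where P2e: "P2 = A @ x # B" by (meson split_list)
      have lxB: "last (x # B) = r" using lP P2e by simp
      have xBP: "set (x # B) \<subseteq> set P2" using P2e by auto
      have dxB: "distinct (x # B)" using dP unfolding P2e by simp
      have sxB: "successively (\<lambda>x y. (x,y)\<in>E) (x # B)" using sP unfolding P2e successively_append_iff
        by blast
      have sT': "successively (\<lambda>x y. (x,y)\<in>E) T" using sT by (auto simp: successively_Cons)
      have rhd: "(r, hd T) \<in> E" using sT Tne by (simp add: successively_Cons)
      define W where "W = (x # B) @ T"
      have dW: "dpath V E W" unfolding W_def dpath_iff
      proof (intro conjI)
        show "distinct ((x # B) @ T)" using dxB dT xBP TP by auto
        show "set ((x # B) @ T) \<subseteq> V" using xBP VP VT by auto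
        show "successively (\<lambda>x y. (x, y) \<in> E) ((x # B) @ T)"
          using sxB sT' lxB rhd Tne by (subst successively_append_iff) auto
      qed simp
      have dZ: "dpath V E [x]" using xP VP by (auto simp: dpath_iff)
      have "alt_path V E 2 b (\<lambda>i. if i = 1 then [p] else [x]) (\<lambda>_. W) \<and>
         alt_walk 2 (\<lambda>i. if i = 1 then [p] else [x]) (\<lambda>_. W) = rev W @ tl [x]"
      proof (rule alt2[OF dW dZ])
        show "b \<le> plen W" using lenT by (simp add: W_def plen_def)
        show "distinct (rev W @ tl [x])" using dW by (simp add: dpath_iff)
        show "last W = p" using lT Tne by (simp add: W_def)
      qed (auto simp: W_def)
      moreover have "set (rev W @ tl [x]) \<inter> {p, q} = {p}"
        using qP xBP qT lT Tne unfolding W_def by auto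
      ultimately show ?thesis
        by (intro bexI[of _ 2] exI[of _ "\<lambda>i::nat. if i = 1 then [p] else [x]"] exI[of _ "\<lambda>_. W"]) auto
    qed
  qed
  show ?thesis using part1 part2' by blast
qed

end
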